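(* Let $h(\cdot,\theta)=[h_1(\cdot,\theta),\dots,h_q(\cdot,\theta)]^T:\mathbb{R}^p\to\mathbb{R}^q$ be twice continuously differentiable in $x$ (for a fixed parameter $\theta$). For each $r\in\{1,\dots,q\}$ let $$s_r:=\sup_{x\in\mathbb{R}^p}\|\nabla^2_x h_r(x,\theta)\|_2,$$ and assume $0<s_r<\infty$. Fix $0<c<1$ and define $$\mathcal{S}_r:=\{x\in\mathbb{R}^p:\ \|\nabla^2_x h_r(x,\theta)\|_2>c\cdot s_r\},\qquad r\in\{1,\dots,q\}.$$ Suppose that $\mu\left(\bigcup_{r=1}^q\mathcal{S}_r\right)<C$ for some finite constant $C$, where $\mu$ is Lebesgue measure on $\mathbb{R}^p$. Then for every $\epsilon>0$ there exists a probability distribution $\mathcal{P}$ on $\mathbb{R}^p$ such that $$\sup_{x\in\mathbb{R}^p}\left\|\mathbb{E}_{\eta\sim\mathcal{P}}\,\nabla^2_x h_r(x+\eta,\theta)\right\|_2<(c+\epsilon)\cdot s_r\qquad\text{for all } r\in\{1,\dots,q\}.$$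
   Context: $h$ represents a single neural network layer with parameters $\theta$; $\nabla^2_x h_r(x,\theta)\in\mathbb{R}^{p\times p}$ is the Hessian of the $r$-th output coordinate with respect to the input $x$, and $\|\cdot\|_2$ on matrices is the spectral (operator) norm. The expectation of the Hessian is taken entrywise over a random perturbation $\eta$ of the input drawn from $\mathcal{P}$. *)

theory Defs
  imports "HOL-Analysis.Analysis" "HOL-Probability.Probability"
begin

definition grad :: "(real^'p \<Rightarrow> real) \<Rightarrow> real^'p \<Rightarrow> real^'p" where
  "grad f x = (\<chi> i. frechet_derivative f (at x) (axis i 1))"

definition hess :: "(real^'p \<Rightarrow> real) \<Rightarrow> real^'p \<Rightarrow> real^'p^'p" where
  "hess f x = (\<chi> i j. frechet_derivative (\<lambda>y. grad f y $ i) (at x) (axis j 1))"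

definition C2 :: "(real^'p \<Rightarrow> real) \<Rightarrow> bool" where
  "C2 f \<longleftrightarrow> (\<forall>x. f differentiable (at x))
      \<and> (\<forall>x i. (\<lambda>y. grad f y $ i) differentiable (at x))
      \<and> continuous_on UNIV (hess f)"

definition spec_norm :: "real^'n^'m \<Rightarrow> real" where
  "spec_norm A = onorm (\<lambda>v. A *v v)"

end

theory Submission
  imports Defs
begin

lemma sn_mult: "norm (A *v v) \<le> spec_norm (A::real^'n^'m) * norm v"
  unfolding spec_norm_def by (rule onorm[OF matrix_vector_mul_bounded_linear])

lemma sn_le: "(\<And>v. norm ((A::real^'n^'m) *v v) \<le> b * norm v) \<Longrightarrow> spec_norm A \<le> b"
  unfolding spec_norm_def by (rule onorm_le)

lemma sn_entry: "\<bar>(A::real^'n^'m) $ i $ j\<bar> \<le> spec_norm A"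
  unfolding spec_norm_def by (rule matrix_component_le_onorm)

lemma sn_lip: "spec_norm (A::real^'n^'m) \<le> spec_norm B + (\<Sum>i\<in>UNIV. \<Sum>j\<in>UNIV. \<bar>(A - B) $ i $ j\<bar>)"
proof (rule sn_le)
  fix v
  have "norm (A *v v) = norm (B *v v + (A - B) *v v)" by (simp add: algebra_simps)
  also have "\<dots> \<le> norm (B *v v) + norm ((A - B) *v v)" by (rule norm_triangle_ineq)
  also have "\<dots> \<le> spec_norm B * norm v + (\<Sum>i\<in>UNIV. \<Sum>j\<in>UNIV. \<bar>(A - B) $ i $ j\<bar>) * norm v"
    using sn_mult[of B v] onorm[OF matrix_vector_mul_bounded_linear, of "A - B" v]
      onorm_le_matrix_component_sum[of "A - B"] mult_right_mono[OF onorm_le_matrix_component_sum[of "A - B"], of "norm v"]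
    by (simp add: spec_norm_def) 
  finally show "norm (A *v v) \<le> (spec_norm B + (\<Sum>i\<in>UNIV. \<Sum>j\<in>UNIV. \<bar>(A - B) $ i $ j\<bar>)) * norm v"
    by (simp add: algebra_simps)
qed

lemma sn_cont:
  fixes F :: "'a::t2_space \<Rightarrow> real^'n^'m"
  assumes "continuous_on UNIV F"
  shows "continuous_on UNIV (\<lambda>x. spec_norm (F x))"
proof (rule continuous_at_imp_continuous_on, intro ballI)
  fix x assume "x \<in> (UNIV::'a set)"
  have FT: "(F \<longlongrightarrow> F x) (at x)"
    using assms by (simp add: continuous_on_eq_continuous_at isCont_def)
  let ?g = "\<lambda>y. (\<Sum>i\<in>UNIV. \<Sum>j\<in>UNIV. \<bar>(F y - F x) $ i $ j\<bar>) + (\<Sum>i\<in>UNIV. \<Sum>j\<in>UNIV. \<bar>(F x - F y) $ i $ j\<bar>)"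
  have g0: "(?g \<longlongrightarrow> 0) (at x)"
  proof -
    have "((\<lambda>y. (F y - F x) $ i $ j) \<longlongrightarrow> 0) (at x)" for i j
    proof -
      have "((\<lambda>y. F y - F x) \<longlongrightarrow> 0) (at x)" using FT by (simp add: LIM_zero)
      then have "((\<lambda>y. (F y - F x) $ i) \<longlongrightarrow> 0 $ i) (at x)" by (rule tendsto_vec_nth)
      then have "((\<lambda>y. (F y - F x) $ i $ j) \<longlongrightarrow> 0 $ i $ j) (at x)" by (rule tendsto_vec_nth)
      then show ?thesis by simp
    qed
    moreover have "((\<lambda>y. (F x - F y) $ i $ j) \<longlongrightarrow> 0) (at x)" for i j
    proof -
      have "((\<lambda>y. F y - F x) \<longlongrightarrow> 0) (at x)" using FT by (simp add: LIM_zero)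
      then have "((\<lambda>y. - (F y - F x)) \<longlongrightarrow> - 0) (at x)" by (rule tendsto_minus)
      then have "((\<lambda>y. F x - F y) \<longlongrightarrow> 0) (at x)" by simp
      then have "((\<lambda>y. (F x - F y) $ i) \<longlongrightarrow> 0 $ i) (at x)" by (rule tendsto_vec_nth)
      then have "((\<lambda>y. (F x - F y) $ i $ j) \<longlongrightarrow> 0 $ i $ j) (at x)" by (rule tendsto_vec_nth)
      then show ?thesis by simp
    qed
    ultimately show ?thesis
      apply -
      apply (rule tendsto_add_zero)
       apply (rule tendsto_null_sum, rule tendsto_null_sum, rule tendsto_rabs_zero, blast)
      apply (rule tendsto_null_sum, rule tendsto_null_sum, rule tendsto_rabs_zero, blast)
      done
  qed
  have "((\<lambda>y. spec_norm (F y) - spec_norm (F x)) \<longlongrightarrow> 0) (at x)"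
  proof (rule Lim_null_comparison[OF _ g0], intro always_eventually allI)
    fix y
    have "spec_norm (F y) \<le> spec_norm (F x) + (\<Sum>i\<in>UNIV. \<Sum>j\<in>UNIV. \<bar>(F y - F x) $ i $ j\<bar>)" by (rule sn_lip)
    moreover have "spec_norm (F x) \<le> spec_norm (F y) + (\<Sum>i\<in>UNIV. \<Sum>j\<in>UNIV. \<bar>(F x - F y) $ i $ j\<bar>)" by (rule sn_lip)
    moreover have "0 \<le> (\<Sum>i\<in>UNIV. \<Sum>j\<in>UNIV. \<bar>(F y - F x) $ i $ j\<bar>)" "0 \<le> (\<Sum>i\<in>UNIV. \<Sum>j\<in>UNIV. \<bar>(F x - F y) $ i $ j\<bar>)"
      by (auto intro!: sum_nonneg)
    ultimately show "norm (spec_norm (F y) - spec_norm (F x)) \<le> ?g y"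
      by (simp only: real_norm_def abs_le_iff) linarith
  qed
  then show "isCont (\<lambda>x. spec_norm (F x)) x" unfolding isCont_def by (simp add: LIM_zero_iff)
qed

lemma bl_mv: "bounded_linear (\<lambda>A::real^'n^'m. A *v v)"
  unfolding linear_conv_bounded_linear[symmetric]
  by (rule linearI) (auto simp: vec_eq_iff matrix_vector_mult_def sum_distrib_left algebra_simps sum.distrib)

theorem theorem4p2:
  fixes h :: "real^'p \<Rightarrow> real^'q" and c :: real and s :: "'q \<Rightarrow> real"
    and S :: "'q \<Rightarrow> (real^'p) set"
  assumes C2: "\<And>r. C2 (\<lambda>x. h x $ r)"
    and bdd: "\<And>r. bdd_above (range (\<lambda>x. spec_norm (hess (\<lambda>y. h y $ r) x)))"
    and s_def: "\<And>r. s r = (SUP x. spec_norm (hess (\<lambda>y. h y $ r) x))"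
    and s_pos: "\<And>r. 0 < s r"
    and c: "0 < c" "c < 1"
    and S_def: "\<And>r. S r = {x. spec_norm (hess (\<lambda>y. h y $ r) x) > c * s r}"
    and meas: "\<exists>C::real. emeasure lborel (\<Union>r. S r) < ennreal C"
  shows "\<forall>\<epsilon>>0. \<exists>P :: (real^'p) measure. prob_space P \<and> sets P = sets borel \<and>
           (\<forall>r. (SUP x. spec_norm (\<chi> i j. \<integral>\<eta>. hess (\<lambda>y. h y $ r) (x + \<eta>) $ i $ j \<partial>P))
                  < (c + \<epsilon>) * s r)"
proof (intro allI impI)
  fix \<epsilon> :: real assume \<epsilon>: "\<epsilon> > 0"
  define H where "H r = hess (\<lambda>y. h y $ r)" for r
  have Hcont: "continuous_on UNIV (H r)" for r using C2[of r] by (simp add: C2_def H_def)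
  have snH_le: "spec_norm (H r x) \<le> s r" for r x
    unfolding s_def H_def by (rule cSUP_upper[OF UNIV_I bdd])
  define U where "U = (\<Union>r. S r)"
  have Sopen: "open (S r)" for r
  proof -
    have "open {x. c * s r < spec_norm (H r x)}"
      by (rule open_Collect_less[OF continuous_on_const sn_cont[OF Hcont]])
    then show ?thesis by (simp add: S_def H_def)
  qed
  have Uopen: "open U" unfolding U_def using Sopen by blast
  have notU: "spec_norm (H r y) \<le> c * s r" if "y \<notin> U" for r y
    using that by (auto simp: U_def S_def H_def not_less)
  obtain C where C: "emeasure lborel U < ennreal C" using meas U_def by auto
  have Cpos: "0 < C"
  proof (rule ccontr)
    assume "\<not> 0 < C"
    then have "ennreal C = 0" by (simp add: ennreal_eq_0_iff)
    then show False using C by simp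
  qed
  define L where "L = C / \<epsilon> + 1"
  have L1: "1 \<le> L" and LC: "C < \<epsilon> * L" using Cpos \<epsilon> by (auto simp: L_def field_simps)
  define a :: "real^'p" where "a = (\<chi> i. L)"
  define B where "B = cbox 0 a"
  define V where "V = L ^ CARD('p)"
  have VB: "emeasure lborel B = ennreal V"
  proof -
    have ib: "\<forall>b\<in>(Basis::(real^'p) set). (a - 0) \<bullet> b = L"
      by (auto simp: a_def Basis_vec_def inner_axis)
    have "(\<Prod>b\<in>(Basis::(real^'p) set). (a - 0) \<bullet> b) = (\<Prod>b\<in>(Basis::(real^'p) set). L)"
      using ib by (intro prod.cong) auto
    also have "\<dots> = V" by (simp add: V_def)
    finally show ?thesis
      unfolding B_def emeasure_lborel_cbox_eq using ib L1 by simp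
  qed
  have LV: "L \<le> V" unfolding V_def using power_increasing[of 1 "CARD('p)" L] L1 by simp
  have Vpos: "0 < V" using LV L1 by simp
  have CV: "C / V < \<epsilon>" using LV LC Vpos \<epsilon> Cpos
    by (simp add: divide_less_eq) (smt (verit) mult_left_mono)
  define P where "P = uniform_measure lborel B"
  have probP: "prob_space P" unfolding P_def
    by (rule prob_space_uniform_measure) (use VB Vpos in auto)
  interpret P: prob_space P by (rule probP)
  have setsP: "sets P = sets borel" by (simp add: P_def)
  have spaceP: "space P = UNIV" by (simp add: P_def)
  have Bsets: "B \<in> sets lborel" by (simp add: B_def)
  have key: "spec_norm (\<chi> i j. \<integral>\<eta>. H r (x + \<eta>) $ i $ j \<partial>P) \<le> c * s r + s r * (C / V)" for r x
  proof -
    define A where "A = (\<lambda>\<eta>. x + \<eta>) -` U"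
    have Aopen: "open A" unfolding A_def
      by (rule continuous_open_vimage[OF Uopen]) (intro continuous_intros)
    then have Asets: "A \<in> sets borel" by simp
    have "emeasure lborel A = emeasure (distr lborel borel ((+) x)) U"
      by (subst emeasure_distr) (auto simp: A_def Uopen)
    also have "\<dots> = emeasure lborel U" by (simp add: lborel_distr_plus)
    finally have eA: "emeasure lborel A = emeasure lborel U" .
    have "emeasure P A = emeasure lborel (B \<inter> A) / emeasure lborel B"
      unfolding P_def using Bsets Asets by (subst emeasure_uniform_measure) auto
    also have "\<dots> \<le> emeasure lborel A / ennreal V"
      unfolding VB by (intro divide_right_mono_ennreal emeasure_mono) (use Asets in auto)
    also have "\<dots> \<le> ennreal C / ennreal V"
      unfolding eA using C by (intro divide_right_mono_ennreal) simp
    also have "\<dots> = ennreal (C / V)" using Cpos Vpos by (simp add: divide_ennreal)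
    finally have "ennreal (measure P A) \<le> ennreal (C / V)" by (simp add: P.emeasure_eq_measure)
    then have mA: "measure P A \<le> C / V" using Cpos Vpos by simp
    have Hc: "continuous_on UNIV (\<lambda>\<eta>. H r (x + \<eta>))"
      by (rule continuous_on_compose2[OF Hcont]) (auto intro!: continuous_intros)
    have Hm: "(\<lambda>\<eta>. H r (x + \<eta>)) \<in> borel_measurable P"
      unfolding measurable_cong_sets[OF setsP refl] by (rule borel_measurable_continuous_onI[OF Hc])
    have entm: "(\<lambda>\<eta>. H r (x + \<eta>) $ i $ j) \<in> borel_measurable P" for i j
      by (rule measurable_compose[OF Hm borel_measurable_continuous_onI]) (intro continuous_intros)
    have entI: "integrable P (\<lambda>\<eta>. H r (x + \<eta>) $ i $ j)" for i j
      by (rule P.integrable_const_bound[where B="s r"])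
         (auto intro!: AE_I2 entm order_trans[OF sn_entry snH_le])
    show ?thesis
    proof (rule sn_le)
      fix v :: "real^'p"
      have Gm: "(\<lambda>\<eta>. H r (x + \<eta>) *v v) \<in> borel_measurable P"
        by (rule measurable_compose[OF Hm borel_measurable_continuous_onI])
           (rule linear_continuous_on[OF bl_mv])
      have GI: "integrable P (\<lambda>\<eta>. H r (x + \<eta>) *v v)"
        by (rule P.integrable_const_bound[where B="s r * norm v"])
           (auto intro!: AE_I2 Gm order_trans[OF sn_mult] mult_right_mono snH_le)
      have eq: "(\<chi> i j. \<integral>\<eta>. H r (x + \<eta>) $ i $ j \<partial>P) *v v = (\<integral>\<eta>. H r (x + \<eta>) *v v \<partial>P)"
      proof (subst vec_eq_iff, intro allI)
        fix i
        have "(\<integral>\<eta>. H r (x + \<eta>) *v v \<partial>P) $ i = (\<integral>\<eta>. (H r (x + \<eta>) *v v) $ i \<partial>P)"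
          by (rule integral_bounded_linear[OF bounded_linear_vec_nth GI, symmetric])
        also have "\<dots> = (\<integral>\<eta>. (\<Sum>j\<in>UNIV. H r (x + \<eta>) $ i $ j * v $ j) \<partial>P)"
          by (simp add: matrix_vector_mult_def)
        also have "\<dots> = (\<Sum>j\<in>UNIV. (\<integral>\<eta>. H r (x + \<eta>) $ i $ j \<partial>P) * v $ j)"
          using entI by (simp add: integral_sum integrable_mult_left_iff)
        finally show "((\<chi> i j. \<integral>\<eta>. H r (x + \<eta>) $ i $ j \<partial>P) *v v) $ i = (\<integral>\<eta>. H r (x + \<eta>) *v v \<partial>P) $ i"
          by (simp add: matrix_vector_mult_def)
      qed
      have bnd: "norm (H r (x + \<eta>) *v v) \<le> (c * s r + s r * indicator A \<eta>) * norm v" for \<eta>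
      proof (cases "\<eta> \<in> A")
        case True
        have "norm (H r (x + \<eta>) *v v) \<le> s r * norm v"
          by (rule order_trans[OF sn_mult mult_right_mono[OF snH_le norm_ge_zero]])
        also have "\<dots> \<le> (c * s r + s r * indicator A \<eta>) * norm v"
          using True c s_pos[of r] by (intro mult_right_mono) auto
        finally show ?thesis .
      next
        case False
        then have "x + \<eta> \<notin> U" by (simp add: A_def)
        then have "norm (H r (x + \<eta>) *v v) \<le> (c * s r) * norm v"
          by (rule order_trans[OF sn_mult mult_right_mono[OF notU norm_ge_zero]])
        then show ?thesis using False by simp
      qed
      have AP: "A \<in> P.events" using Asets setsP by simp
      have II: "integrable P (indicator A :: _ \<Rightarrow> real)"
        using AP by (auto simp: less_top[symmetric])
      have RI0: "integrable P (\<lambda>\<eta>. c * s r + s r * indicator A \<eta>)"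
        using II by auto
      have RI: "integrable P (\<lambda>\<eta>. (c * s r + s r * indicator A \<eta>) * norm v)"
        using RI0 by (rule integrable_mult_left)
      have "norm ((\<chi> i j. \<integral>\<eta>. H r (x + \<eta>) $ i $ j \<partial>P) *v v) \<le> (\<integral>\<eta>. norm (H r (x + \<eta>) *v v) \<partial>P)"
        unfolding eq by (rule integral_norm_bound)
      also have "\<dots> \<le> (\<integral>\<eta>. (c * s r + s r * indicator A \<eta>) * norm v \<partial>P)"
        by (rule integral_mono[OF _ RI]) (use GI bnd in auto)
      also have "\<dots> = (c * s r + s r * measure P A) * norm v"
      proof -
        have "(\<integral>\<eta>. c * s r + s r * indicator A \<eta> \<partial>P) = c * s r + s r * measure P A"
        proof -
          have I2: "integrable P (\<lambda>\<eta>. s r * indicator A \<eta> :: real)" using II by simp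
          have "(\<integral>\<eta>. c * s r + s r * indicator A \<eta> \<partial>P) = (\<integral>\<eta>. c * s r \<partial>P) + (\<integral>\<eta>. s r * indicator A \<eta> \<partial>P)"
            by (rule Bochner_Integration.integral_add[OF P.integrable_const I2])
          then show ?thesis using spaceP P.prob_space by simp
        qed
        then show ?thesis by simp
      qed
      also have "\<dots> \<le> (c * s r + s r * (C / V)) * norm v"
        using mA s_pos[of r] by (intro mult_right_mono add_left_mono mult_left_mono) auto
      finally show "norm ((\<chi> i j. \<integral>\<eta>. H r (x + \<eta>) $ i $ j \<partial>P) *v v) \<le> (c * s r + s r * (C / V)) * norm v" .
    qed
  qed
  show "\<exists>P :: (real^'p) measure. prob_space P \<and> sets P = sets borel \<and>
           (\<forall>r. (SUP x. spec_norm (\<chi> i j. \<integral>\<eta>. hess (\<lambda>y. h y $ r) (x + \<eta>) $ i $ j \<partial>P))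
                  < (c + \<epsilon>) * s r)"
  proof (intro exI conjI allI)
    show "prob_space P" by (rule probP)
    show "sets P = sets borel" by (rule setsP)
    fix r
    have "(SUP x. spec_norm (\<chi> i j. \<integral>\<eta>. hess (\<lambda>y. h y $ r) (x + \<eta>) $ i $ j \<partial>P)) \<le> c * s r + s r * (C / V)"
      by (rule cSUP_least) (use key in \<open>auto simp: H_def\<close>)
    also have "\<dots> < (c + \<epsilon>) * s r"
    proof -
      have "s r * (C / V) < s r * \<epsilon>" using CV s_pos[of r] by (rule mult_strict_left_mono[OF _ ]) 
      then show ?thesis by (simp add: algebra_simps)
    qed
    finally show "(SUP x. spec_norm (\<chi> i j. \<integral>\<eta>. hess (\<lambda>y. h y $ r) (x + \<eta>) $ i $ j \<partial>P)) < (c + \<epsilon>) * s r" .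
  qed
qed

end
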